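(* Let $\mathfrak g$ be a Lie algebra in which every abelian ideal is central. Then: (a) every nilpotent ideal $\mathfrak n$ of $\mathfrak g$ satisfies $C^2(\mathfrak n)\subseteq\mathfrak z(\mathfrak g)$ and $C^3(\mathfrak n)=\{0\}$; (b) if $\mathfrak r$ is a solvable ideal of $\mathfrak g$ and $n\in\mathbb N_0$ is maximal with $D^n(\mathfrak r)\neq\{0\}$, then $D^n(\mathfrak r)$ is central in $\mathfrak g$; (c) the center of the Lie algebra $\mathrm{ad}\,\mathfrak g$ is trivial, $\mathfrak z(\mathrm{ad}\,\mathfrak g)=\{0\}$; (d) if $\mathfrak g$ is nilpotent, then $\mathfrak g$ is abelian.
   Context: For a Lie algebra $\mathfrak h$: the derived series is $D^0(\mathfrak h)=\mathfrak h$, $D^{n+1}(\mathfrak h)=[D^n(\mathfrak h),D^n(\mathfrak h)]$; the descending central series is $C^1(\mathfrak h)=\mathfrak h$, $C^{n+1}(\mathfrak h)=[\mathfrak h,C^n(\mathfrak h)]$. $\mathfrak z(\mathfrak g)$ denotes the center of $\mathfrak g$. *)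

theory Defs
  imports Complex_Main
begin

definition lie_algebra :: "('k::field \<Rightarrow> 'a::ab_group_add \<Rightarrow> 'a) \<Rightarrow> ('a \<Rightarrow> 'a \<Rightarrow> 'a) \<Rightarrow> bool" where
  "lie_algebra sm br \<longleftrightarrow> vector_space sm \<and>
     (\<forall>x y z. br (x + y) z = br x z + br y z) \<and>
     (\<forall>x y z. br x (y + z) = br x y + br x z) \<and>
     (\<forall>c x y. br (sm c x) y = sm c (br x y)) \<and>
     (\<forall>c x y. br x (sm c y) = sm c (br x y)) \<and>
     (\<forall>x. br x x = 0) \<and>
     (\<forall>x y z. br x (br y z) + br y (br z x) + br z (br x y) = 0)"

definition lie_bracket_set :: "('k::field \<Rightarrow> 'a::ab_group_add \<Rightarrow> 'a) \<Rightarrow> ('a \<Rightarrow> 'a \<Rightarrow> 'a) \<Rightarrow> 'a set \<Rightarrow> 'a set \<Rightarrow> 'a set" where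
  "lie_bracket_set sm br A B = module.span sm {br a b | a b. a \<in> A \<and> b \<in> B}"

definition lie_ideal :: "('k::field \<Rightarrow> 'a::ab_group_add \<Rightarrow> 'a) \<Rightarrow> ('a \<Rightarrow> 'a \<Rightarrow> 'a) \<Rightarrow> 'a set \<Rightarrow> bool" where
  "lie_ideal sm br I \<longleftrightarrow> module.subspace sm I \<and> (\<forall>x y. y \<in> I \<longrightarrow> br x y \<in> I)"

definition lie_center :: "('a \<Rightarrow> 'a \<Rightarrow> 'a::ab_group_add) \<Rightarrow> 'a set" where
  "lie_center br = {z. \<forall>x. br x z = 0}"

primrec derived_series :: "('k::field \<Rightarrow> 'a::ab_group_add \<Rightarrow> 'a) \<Rightarrow> ('a \<Rightarrow> 'a \<Rightarrow> 'a) \<Rightarrow> 'a set \<Rightarrow> nat \<Rightarrow> 'a set" where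
  "derived_series sm br h 0 = h"
| "derived_series sm br h (Suc n) =
     lie_bracket_set sm br (derived_series sm br h n) (derived_series sm br h n)"

text \<open>Descending central series: C^1 h = h, C^(n+1) h = [h, C^n h]
  (index 0 is unused by the paper; we set C^0 h = h).\<close>
fun lower_central_series :: "('k::field \<Rightarrow> 'a::ab_group_add \<Rightarrow> 'a) \<Rightarrow> ('a \<Rightarrow> 'a \<Rightarrow> 'a) \<Rightarrow> 'a set \<Rightarrow> nat \<Rightarrow> 'a set" where
  "lower_central_series sm br h 0 = h"
| "lower_central_series sm br h (Suc 0) = h"
| "lower_central_series sm br h (Suc (Suc n)) =
     lie_bracket_set sm br h (lower_central_series sm br h (Suc n))"

definition lie_nilpotent :: "('k::field \<Rightarrow> 'a::ab_group_add \<Rightarrow> 'a) \<Rightarrow> ('a \<Rightarrow> 'a \<Rightarrow> 'a) \<Rightarrow> 'a set \<Rightarrow> bool" where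
  "lie_nilpotent sm br h \<longleftrightarrow> (\<exists>k. lower_central_series sm br h k = {0})"

definition lie_solvable :: "('k::field \<Rightarrow> 'a::ab_group_add \<Rightarrow> 'a) \<Rightarrow> ('a \<Rightarrow> 'a \<Rightarrow> 'a) \<Rightarrow> 'a set \<Rightarrow> bool" where
  "lie_solvable sm br h \<longleftrightarrow> (\<exists>k. derived_series sm br h k = {0})"

definition ad :: "('a \<Rightarrow> 'a \<Rightarrow> 'a) \<Rightarrow> 'a \<Rightarrow> 'a \<Rightarrow> 'a" where
  "ad br x = br x"

definition endo_commutator :: "('a \<Rightarrow> 'a) \<Rightarrow> ('a \<Rightarrow> 'a) \<Rightarrow> 'a \<Rightarrow> 'a::ab_group_add" where
  "endo_commutator f g = (\<lambda>z. f (g z) - g (f z))"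

definition ad_center :: "('a \<Rightarrow> 'a \<Rightarrow> 'a::ab_group_add) \<Rightarrow> ('a \<Rightarrow> 'a) set" where
  "ad_center br = {f \<in> range (ad br). \<forall>g \<in> range (ad br). endo_commutator f g = (\<lambda>_. 0)}"

end

theory Submission imports Defs begin

locale LA = module sm for sm :: "'k::field \<Rightarrow> 'a::ab_group_add \<Rightarrow> 'a" +
  fixes br :: "'a \<Rightarrow> 'a \<Rightarrow> 'a"
  assumes addL: "br (x + y) z = br x z + br y z"
    and addR: "br x (y + z) = br x y + br x z"
    and smL: "br (sm c x) y = sm c (br x y)"
    and smR: "br x (sm c y) = sm c (br x y)"
    and alt: "br x x = 0"
    and jac: "br x (br y z) + br y (br z x) + br z (br x y) = 0"
begin

lemma zeroL[simp]: "br 0 x = 0"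
  using addL[of 0 0 x] by simp
lemma zeroR[simp]: "br x 0 = 0"
  using addR[of x 0 0] by simp
lemma anti: "br x y = - br y x"
proof -
  have "0 = br (x+y) (x+y)" by (simp add: alt)
  also have "\<dots> = br x x + br x y + (br y x + br y y)" by (simp add: addL addR add.assoc)
  also have "\<dots> = br x y + br y x" by (simp add: alt)
  finally have "br x y + br y x = 0" by simp
  thus ?thesis by (simp add: eq_neg_iff_add_eq_0)
qed
lemma deriv: "br x (br a b) = br (br x a) b + br a (br x b)"
proof -
  have "br x (br a b) = - br a (br b x) - br b (br x a)"
    using jac[of x a b] by (simp add: eq_neg_iff_add_eq_0 algebra_simps add.assoc)
  also have "br a (br b x) = - br a (br x b)"
    by (metis anti addR add.right_inverse add_eq_0_iff zeroR)
  also have "br b (br x a) = - br (br x a) b" by (rule anti)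
  finally show ?thesis by simp
qed

lemma span_L: "a \<in> span G \<Longrightarrow> (\<forall>g\<in>G. br g b = 0) \<Longrightarrow> br a b = 0"
  by (induction a rule: span_induct_alt) (auto simp: addL smL)

lemma span_R_mem: "b \<in> span G \<Longrightarrow> subspace T \<Longrightarrow> (\<forall>g\<in>G. br a g \<in> T) \<Longrightarrow> br a b \<in> T"
  by (induction b rule: span_induct_alt) (auto simp: addR smR subspace_0 subspace_add subspace_scale)

lemma bs_zero: "(\<forall>a\<in>A. \<forall>b\<in>B. br a b = 0) \<Longrightarrow> lie_bracket_set sm br A B = {0}"
proof -
  assume h: "\<forall>a\<in>A. \<forall>b\<in>B. br a b = 0"
  have "lie_bracket_set sm br A B \<subseteq> span {0}"
    unfolding lie_bracket_set_def by (rule span_mono) (use h in auto)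
  moreover have "span {0::'a} = {0}" by simp
  ultimately show ?thesis unfolding lie_bracket_set_def using span_zero by blast
qed

lemma bs_mem: "a \<in> A \<Longrightarrow> b \<in> B \<Longrightarrow> br a b \<in> lie_bracket_set sm br A B"
  unfolding lie_bracket_set_def by (rule span_base) blast

lemma bs_sub: "(\<forall>a\<in>A. \<forall>b\<in>B. br a b \<in> T) \<Longrightarrow> subspace T \<Longrightarrow> lie_bracket_set sm br A B \<subseteq> T"
  unfolding lie_bracket_set_def by (rule span_minimal) auto

lemma ideal_bs: assumes "lie_ideal sm br A" "lie_ideal sm br B"
  shows "lie_ideal sm br (lie_bracket_set sm br A B)"
  unfolding lie_ideal_def
proof (intro conjI allI impI)
  show "subspace (lie_bracket_set sm br A B)" unfolding lie_bracket_set_def by simp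
  fix x y assume y: "y \<in> lie_bracket_set sm br A B"
  show "br x y \<in> lie_bracket_set sm br A B"
    using y unfolding lie_bracket_set_def
  proof (rule span_R_mem)
    show "subspace (span {br a b |a b. a \<in> A \<and> b \<in> B})" by simp
    show "\<forall>g\<in>{br a b |a b. a \<in> A \<and> b \<in> B}. br x g \<in> span {br a b |a b. a \<in> A \<and> b \<in> B}"
    proof safe
      fix a b assume "a \<in> A" "b \<in> B"
      hence "br x a \<in> A" "br x b \<in> B" using assms unfolding lie_ideal_def by auto
      hence "br (br x a) b \<in> span {br a b |a b. a \<in> A \<and> b \<in> B}"
            "br a (br x b) \<in> span {br a b |a b. a \<in> A \<and> b \<in> B}"
        using \<open>a \<in> A\<close> \<open>b \<in> B\<close> by (auto intro!: span_base)
      hence "br (br x a) b + br a (br x b) \<in> span {br a b |a b. a \<in> A \<and> b \<in> B}"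
        by (rule span_add)
      thus "br x (br a b) \<in> span {br a b |a b. a \<in> A \<and> b \<in> B}"
        by (simp only: deriv[of x a b])
    qed
  qed
qed

lemma center_sub: "subspace (lie_center br)"
  unfolding subspace_def lie_center_def by (auto simp: addR smR)

lemma span_neg': "x \<in> span S \<Longrightarrow> - x \<in> span S"
  using span_scale[of x S "-1"] by simp

lemma sub_neg: "subspace T \<Longrightarrow> x \<in> T \<Longrightarrow> - x \<in> T"
  using subspace_scale[of T x "-1"] by simp

context fixes Z assumes Zdef: "Z = lie_center br"
  and H: "\<forall>I. lie_ideal sm br I \<and> lie_bracket_set sm br I I = {0} \<longrightarrow> I \<subseteq> lie_center br"
begin

lemma inZ: "z \<in> Z \<Longrightarrow> br w z = 0" using Zdef unfolding lie_center_def by auto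
lemma inZ': "z \<in> Z \<Longrightarrow> br z w = 0" using inZ anti by (metis neg_0_equal_iff_equal)

lemma central_crit: assumes "\<forall>y. br x y \<in> Z" shows "x \<in> Z"
proof -
  define G where "G = insert x Z"
  define I where "I = span G"
  have ZI: "Z \<subseteq> I" unfolding I_def G_def using span_superset by blast
  have gen: "\<forall>h\<in>G. \<forall>g\<in>G. br h g = 0"
    unfolding G_def using inZ inZ' alt by auto
  have ab: "\<forall>a\<in>I. \<forall>b\<in>I. br a b = 0"
  proof (intro ballI)
    fix a b assume a: "a \<in> I" and b: "b \<in> I"
    have "\<forall>g\<in>G. br b g = 0"
      using b gen unfolding I_def by (auto intro: span_L)
    hence "\<forall>g\<in>G. br g b = 0" by (metis anti neg_0_equal_iff_equal)
    thus "br a b = 0" using a span_L unfolding I_def by blast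
  qed
  have id: "lie_ideal sm br I"
    unfolding lie_ideal_def
  proof (intro conjI allI impI)
    show "subspace I" unfolding I_def by simp
    fix w y assume "y \<in> I"
    thus "br w y \<in> I" unfolding I_def
    proof (rule span_R_mem)
      show "subspace (span G)" by simp
      show "\<forall>g\<in>G. br w g \<in> span G"
      proof
        fix g assume "g \<in> G"
        then consider "g = x" | "g \<in> Z" unfolding G_def by auto
        thus "br w g \<in> span G"
        proof cases
          case 1
          have "br x w \<in> span G" using assms ZI I_def by auto
          thus ?thesis using 1 anti[of w x] span_neg' by simp
        next
          case 2 thus ?thesis using inZ span_zero by simp
        qed
      qed
    qed
  qed
  have "I \<subseteq> Z" using H id bs_zero[OF ab] Zdef by blast
  thus ?thesis unfolding I_def G_def using span_superset by blast
qed

lemma D_ideal: "lie_ideal sm br R \<Longrightarrow> lie_ideal sm br (derived_series sm br R n)"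
  by (induction n) (auto intro: ideal_bs)

lemma partb: "lie_ideal sm br R \<Longrightarrow> derived_series sm br R (Suc n) = {0}
   \<Longrightarrow> derived_series sm br R n \<subseteq> Z"
  using H D_ideal[of R n] Zdef by auto

context fixes N assumes NI: "lie_ideal sm br N"
begin

lemma C_sub: "lower_central_series sm br N j \<subseteq> N"
proof (induction j rule: less_induct)
  case (less j)
  consider "j = 0" | "j = Suc 0" | n where "j = Suc (Suc n)" by (metis not0_implies_Suc)
  then show ?case
  proof cases
    case (3 n)
    hence j: "j = Suc (Suc n)" by simp
    have IH: "lower_central_series sm br N (Suc n) \<subseteq> N" using less j by auto
    have "subspace N" using NI lie_ideal_def by blast
    moreover have "\<forall>a\<in>N. \<forall>b\<in>lower_central_series sm br N (Suc n). br a b \<in> N"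
      using IH NI unfolding lie_ideal_def by blast
    ultimately show ?thesis using j bs_sub by simp
  qed auto
qed

lemma C_ideal: "lie_ideal sm br (lower_central_series sm br N j)"
proof (induction j rule: less_induct)
  case (less j)
  consider "j = 0" | "j = Suc 0" | n where "j = Suc (Suc n)" by (metis not0_implies_Suc)
  then show ?case
  proof cases
    case (3 n)
    hence j: "j = Suc (Suc n)" by simp
    show ?thesis using less j NI by (auto intro: ideal_bs)
  qed (use NI in auto)
qed

lemma C_zero_Suc: "lower_central_series sm br N (Suc j) = {0}" if "lower_central_series sm br N j = {0}"
proof (cases j)
  case 0
  thus ?thesis using that by simp
next
  case (Suc i)
  have "\<forall>a\<in>N. \<forall>b\<in>lower_central_series sm br N (Suc i). br a b = 0" using that Suc by simp
  hence "lie_bracket_set sm br N (lower_central_series sm br N (Suc i)) = {0}" by (rule bs_zero)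
  thus ?thesis using Suc by simp
qed

lemma C_zero: "lower_central_series sm br N j = {0} \<Longrightarrow> lower_central_series sm br N (j + d) = {0}"
  by (induction d) (simp_all add: C_zero_Suc)

lemma C_step: assumes "lower_central_series sm br N (Suc (Suc (Suc j))) \<subseteq> Z"
  shows "lower_central_series sm br N (Suc (Suc j)) \<subseteq> Z"
proof -
  let ?m = "lower_central_series sm br N (Suc (Suc j))"
  let ?c = "lower_central_series sm br N (Suc j)"
  have M: "lower_central_series sm br N (Suc (Suc (Suc j))) = lie_bracket_set sm br N ?m" by simp
  have ab: "\<forall>a\<in>?m. \<forall>b\<in>?m. br a b = 0"
  proof (intro ballI)
    fix a b assume a: "a \<in> ?m" and b: "b \<in> ?m"
    have "\<forall>g\<in>{br n c |n c. n \<in> N \<and> c \<in> ?c}. br g b = 0"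
    proof safe
      fix n c assume n: "n \<in> N" and c: "c \<in> ?c"
      have cN: "c \<in> N" using C_sub c by blast
      have "br c b \<in> Z" using bs_mem[OF cN b] M assms by auto
      moreover have "br n b \<in> Z" using bs_mem[OF n b] M assms by auto
      ultimately have "br n (br c b) = 0" "br c (br n b) = 0" using inZ by auto
      thus "br (br n c) b = 0" using deriv[of n c b] by simp
    qed
    moreover have "a \<in> span {br n c |n c. n \<in> N \<and> c \<in> ?c}"
      using a by (simp add: lie_bracket_set_def)
    ultimately show "br a b = 0" using span_L by blast
  qed
  show ?thesis using H C_ideal[of "Suc (Suc j)"] bs_zero[OF ab] Zdef by blast
qed

lemma C2: assumes "lower_central_series sm br N k = {0}"
  shows "lower_central_series sm br N 2 \<subseteq> Z"
proof -
  have "\<forall>d. lower_central_series sm br N (Suc (Suc (k - d))) \<subseteq> Z"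
  proof
    fix d show "lower_central_series sm br N (Suc (Suc (k - d))) \<subseteq> Z"
    proof (induction d)
      case 0
      have "lower_central_series sm br N (Suc (Suc k)) = {0}" using C_zero[OF assms, of 2] by simp
      thus ?case by (simp add: Zdef lie_center_def)
    next
      case (Suc d)
      show ?case
      proof (cases "d < k")
        case True
        hence "k - d = Suc (k - Suc d)" by simp
        thus ?thesis using Suc C_step by simp
      next
        case False
        hence "k - Suc d = k - d" by simp
        thus ?thesis using Suc by simp
      qed
    qed
  qed
  hence "lower_central_series sm br N (Suc (Suc 0)) \<subseteq> Z" by (metis diff_self_eq_0)
  thus ?thesis by (simp only: numeral_2_eq_2)
qed

lemma C3: assumes "lower_central_series sm br N k = {0}"
  shows "lower_central_series sm br N 3 = {0}"
proof -
  have "lower_central_series sm br N 3 = lie_bracket_set sm br N (lower_central_series sm br N 2)"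
    by (simp only: numeral_3_eq_3 numeral_2_eq_2 lower_central_series.simps)
  also have "\<dots> = {0}" using C2[OF assms] inZ by (intro bs_zero) auto
  finally show ?thesis .
qed

end
end

end

lemma LA_of: "lie_algebra sm br \<Longrightarrow> LA sm br"
  unfolding lie_algebra_def LA_def LA_axioms_def by (auto simp: module_iff_vector_space)

theorem lemma1p4:
  fixes sm :: "'k::field \<Rightarrow> 'a::ab_group_add \<Rightarrow> 'a"
    and br :: "'a \<Rightarrow> 'a \<Rightarrow> 'a"
  assumes "lie_algebra sm br"
    and "\<forall>I. lie_ideal sm br I \<and> lie_bracket_set sm br I I = {0} \<longrightarrow> I \<subseteq> lie_center br"
  shows "(\<forall>N. lie_ideal sm br N \<and> lie_nilpotent sm br N \<longrightarrow>
             lower_central_series sm br N 2 \<subseteq> lie_center br \<and> lower_central_series sm br N 3 = {0})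
       \<and> (\<forall>R n. lie_ideal sm br R \<and> lie_solvable sm br R \<and> derived_series sm br R n \<noteq> {0}
             \<and> (\<forall>m>n. derived_series sm br R m = {0}) \<longrightarrow> derived_series sm br R n \<subseteq> lie_center br)
       \<and> ad_center br = {\<lambda>_. 0}
       \<and> (lie_nilpotent sm br UNIV \<longrightarrow> lie_bracket_set sm br UNIV UNIV = {0})"
proof -
  interpret L: LA sm br using LA_of assms(1) .
  let ?Z = "lie_center br"
  note H = assms(2)
  have cc: "\<And>x. (\<forall>y. br x y \<in> ?Z) \<Longrightarrow> x \<in> ?Z" by (rule L.central_crit[OF refl H])
  have zero_of: "\<And>x. x \<in> ?Z \<Longrightarrow> br x = (\<lambda>_. 0)"
  proof
    fix x z assume "x \<in> ?Z"
    hence "br z x = 0" by (simp add: lie_center_def)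
    thus "br x z = 0" by (metis L.anti neg_0_equal_iff_equal)
  qed
  have A: "\<forall>N. lie_ideal sm br N \<and> lie_nilpotent sm br N \<longrightarrow>
             lower_central_series sm br N 2 \<subseteq> lie_center br \<and> lower_central_series sm br N 3 = {0}"
  proof (intro allI impI)
    fix N assume N: "lie_ideal sm br N \<and> lie_nilpotent sm br N"
    then obtain k where k: "lower_central_series sm br N k = {0}" unfolding lie_nilpotent_def by blast
    show "lower_central_series sm br N 2 \<subseteq> lie_center br \<and> lower_central_series sm br N 3 = {0}"
    proof
      show "lower_central_series sm br N 2 \<subseteq> lie_center br" using N by (intro L.C2[OF refl H _ k]) simp
      show "lower_central_series sm br N 3 = {0}" using N by (intro L.C3[OF refl H _ k]) simp
    qed
  qed
  have B: "\<forall>R n. lie_ideal sm br R \<and> lie_solvable sm br R \<and> derived_series sm br R n \<noteq> {0}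
             \<and> (\<forall>m>n. derived_series sm br R m = {0}) \<longrightarrow> derived_series sm br R n \<subseteq> lie_center br"
  proof (intro allI impI)
    fix R n assume a: "lie_ideal sm br R \<and> lie_solvable sm br R \<and> derived_series sm br R n \<noteq> {0}
             \<and> (\<forall>m>n. derived_series sm br R m = {0})"
    hence "derived_series sm br R (Suc n) = {0}" using lessI by blast
    thus "derived_series sm br R n \<subseteq> lie_center br" using a by (intro L.partb[OF refl H]) simp_all
  qed
  have C: "ad_center br = {\<lambda>_. 0}"
  proof
    show "ad_center br \<subseteq> {\<lambda>_. 0}"
    proof
      fix f assume f: "f \<in> ad_center br"
      then obtain x where fx: "f = br x" unfolding ad_center_def ad_def by auto
      have "\<forall>y. br x y \<in> ?Z"
      proof
        fix y
        have e: "endo_commutator (br x) (br y) = (\<lambda>_. 0)"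
          using f fx unfolding ad_center_def ad_def by auto
        have "\<forall>z. br (br x y) z = 0"
        proof
          fix z
          have "br x (br y z) - br y (br x z) = 0" using fun_cong[OF e, of z]
            by (simp add: endo_commutator_def)
          thus "br (br x y) z = 0" using L.deriv[of x y z] by simp
        qed
        hence z: "br (br x y) w = 0" for w by blast
        have "\<forall>w. br w (br x y) = 0"
        proof
          fix w show "br w (br x y) = 0" using L.anti[of w "br x y"] z[of w] by simp
        qed
        thus "br x y \<in> ?Z" unfolding lie_center_def by simp
      qed
      hence "x \<in> ?Z" by (rule cc)
      hence "f = (\<lambda>_. 0)" using zero_of fx by simp
      thus "f \<in> {\<lambda>_. 0}" by simp
    qed
    show "{\<lambda>_. 0} \<subseteq> ad_center br"
      unfolding ad_center_def ad_def endo_commutator_def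
      by (auto intro!: image_eqI[of _ _ 0] ext)
  qed
  have D: "lie_nilpotent sm br UNIV \<longrightarrow> lie_bracket_set sm br UNIV UNIV = {0}"
  proof
    assume "lie_nilpotent sm br UNIV"
    moreover have "lie_ideal sm br UNIV" unfolding lie_ideal_def by simp
    ultimately have "lower_central_series sm br UNIV 2 \<subseteq> ?Z" using A by blast
    hence "lie_bracket_set sm br UNIV UNIV \<subseteq> ?Z" by (simp only: numeral_2_eq_2 lower_central_series.simps)
    hence "\<forall>x. x \<in> ?Z"
    proof (intro allI)
      fix x
      assume h: "lie_bracket_set sm br UNIV UNIV \<subseteq> ?Z"
      have "\<forall>y. br x y \<in> ?Z"
      proof
        fix y
        have "br x y \<in> lie_bracket_set sm br UNIV UNIV" by (rule L.bs_mem) simp_all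
        thus "br x y \<in> ?Z" using h by blast
      qed
      thus "x \<in> ?Z" by (rule cc)
    qed
    thus "lie_bracket_set sm br UNIV UNIV = {0}" using zero_of by (intro L.bs_zero) auto
  qed
  show ?thesis using A B C D by blast
qed

end
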